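(* Let $\beta$ be a basis set in $x_1,\dots,x_r$ such that every non-standard arrow for $\beta$ is translation-equivalent to $0$. Let $x_j$ be a variable and $h$ a positive integer such that some monomial of $\beta$ is divisible by $x_j^h$, and let $\beta_t=\{m : x_j^h m\in\beta\}$ be the $x_j$-truncation of $\beta$ at height $h$. Then every non-standard arrow for $\beta_t$ is translation-equivalent to $0$ (with respect to $\beta_t$).
   Context: Monomials are identified with exponent vectors. A basis set is a finite nonempty set of monomials closed under taking divisors. For a basis set $\gamma$, an arrow for $\gamma$ is a pair $(\mathbf d,\mathbf j)$ with tail $\mathbf x^{\mathbf d}\notin\gamma$ and head $\mathbf x^{\mathbf j}\in\gamma$, written $c^{\mathbf d}_{\mathbf j}$; its vector is $\mathbf j-\mathbf d$; it is standard if the vector has exactly one negative component and non-standard otherwise. A translation step replaces $(\mathbf d,\mathbf j)$ by $(\mathbf d\pm e_i,\mathbf j\pm e_i)$ provided the result is again an arrow for $\gamma$ (nonnegative exponents, head in $\gamma$, tail not in $\gamma$); $\sim$ is the generated equivalence relation. An arrow $c$ is translation-equivalent to $0$ ($c\sim0$) if $c$ is translation-equivalent to an arrow $(\mathbf d',\mathbf j')$ with, for some $i$, $j'_i=0$, $d'_i\ge1$ and $\mathbf x^{\mathbf d'-e_i}\notin\gamma$. *)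

theory Defs
  imports Main
begin

text \<open>Monomials in variables indexed by a finite type 'v are exponent vectors 'v \<Rightarrow> nat.\<close>

type_synonym 'v mon = "'v \<Rightarrow> nat"

definition unitv :: "'v \<Rightarrow> 'v mon" where
  "unitv i = (\<lambda>k. if k = i then 1 else 0)"

definition divides_mon :: "'v mon \<Rightarrow> 'v mon \<Rightarrow> bool" where
  "divides_mon d m \<longleftrightarrow> (\<forall>k. d k \<le> m k)"

definition basis_set :: "'v mon set \<Rightarrow> bool" where
  "basis_set \<gamma> \<longleftrightarrow> finite \<gamma> \<and> \<gamma> \<noteq> {} \<and>
     (\<forall>m\<in>\<gamma>. \<forall>d. divides_mon d m \<longrightarrow> d \<in> \<gamma>)"

text \<open>An arrow c^d_j is the pair (d, j): tail d outside \<gamma>, head j in \<gamma>.\<close>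
definition arrow :: "'v mon set \<Rightarrow> 'v mon \<times> 'v mon \<Rightarrow> bool" where
  "arrow \<gamma> c \<longleftrightarrow> fst c \<notin> \<gamma> \<and> snd c \<in> \<gamma>"

definition standard :: "'v mon \<times> 'v mon \<Rightarrow> bool" where
  "standard c \<longleftrightarrow> (\<exists>!i. snd c i < fst c i)"

definition nonstandard :: "'v mon \<times> 'v mon \<Rightarrow> bool" where
  "nonstandard c \<longleftrightarrow> \<not> standard c"

definition shift_up :: "'v \<Rightarrow> 'v mon \<times> 'v mon \<Rightarrow> 'v mon \<times> 'v mon" where
  "shift_up i c = ((\<lambda>k. fst c k + unitv i k), (\<lambda>k. snd c k + unitv i k))"

definition tstep :: "'v mon set \<Rightarrow> 'v mon \<times> 'v mon \<Rightarrow> 'v mon \<times> 'v mon \<Rightarrow> bool" where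
  "tstep \<gamma> a b \<longleftrightarrow> arrow \<gamma> a \<and> arrow \<gamma> b \<and>
     (\<exists>i. b = shift_up i a \<or> a = shift_up i b)"

definition transl_equiv :: "'v mon set \<Rightarrow> 'v mon \<times> 'v mon \<Rightarrow> 'v mon \<times> 'v mon \<Rightarrow> bool" where
  "transl_equiv \<gamma> = (\<lambda>a b. tstep \<gamma> a b \<or> tstep \<gamma> b a)\<^sup>*\<^sup>*"

definition equiv_zero :: "'v mon set \<Rightarrow> 'v mon \<times> 'v mon \<Rightarrow> bool" where
  "equiv_zero \<gamma> c \<longleftrightarrow> (\<exists>d' j'. transl_equiv \<gamma> c (d', j') \<and>
     (\<exists>i. j' i = 0 \<and> d' i \<ge> 1 \<and> (\<lambda>k. d' k - unitv i k) \<notin> \<gamma>))"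

definition truncation :: "'v mon set \<Rightarrow> 'v \<Rightarrow> nat \<Rightarrow> 'v mon set" where
  "truncation \<beta> j h = {m. (\<lambda>k. m k + h * unitv j k) \<in> \<beta>}"

end

theory Submission
  imports Defs
begin

definition downc :: "'v mon set \<Rightarrow> bool" where
  "downc \<gamma> \<longleftrightarrow> (\<forall>m\<in>\<gamma>. \<forall>d. divides_mon d m \<longrightarrow> d \<in> \<gamma>)"

definition PP :: "'v mon set \<Rightarrow> bool" where
  "PP \<gamma> \<longleftrightarrow> (\<forall>c. arrow \<gamma> c \<and> nonstandard c \<longrightarrow> equiv_zero \<gamma> c)"

lemma fst_shift[simp]: "fst (shift_up i c) = (\<lambda>k. fst c k + unitv i k)"
  by (simp add: shift_up_def)
lemma snd_shift[simp]: "snd (shift_up i c) = (\<lambda>k. snd c k + unitv i k)"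
  by (simp add: shift_up_def)

lemma shift_inj: "shift_up j a = shift_up j b \<Longrightarrow> a = b"
  by (cases a, cases b) (auto simp: shift_up_def fun_eq_iff)

lemma shift_comm: "shift_up i (shift_up j a) = shift_up j (shift_up i a)"
  by (auto simp: shift_up_def fun_eq_iff)

lemma nonstandard_shift: "nonstandard (shift_up i a) \<longleftrightarrow> nonstandard a"
proof -
  have "\<And>k. (snd (shift_up i a) k < fst (shift_up i a) k) = (snd a k < fst a k)" by simp
  then show ?thesis unfolding nonstandard_def standard_def by simp
qed

lemma T_sub: "downc \<beta> \<Longrightarrow> m \<in> truncation \<beta> j 1 \<Longrightarrow> m \<in> \<beta>"
  unfolding downc_def truncation_def divides_mon_def by force

lemma arrow_T_iff: "arrow (truncation \<beta> j 1) a \<longleftrightarrow> arrow \<beta> (shift_up j a)"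
  by (simp add: arrow_def truncation_def)

lemma te_arrow: "transl_equiv \<gamma> c a \<Longrightarrow> arrow \<gamma> c \<Longrightarrow> arrow \<gamma> a"
  unfolding transl_equiv_def
  by (induction rule: rtranclp_induct) (auto simp: tstep_def)

lemma te_step: "transl_equiv \<gamma> c a \<Longrightarrow> tstep \<gamma> a b \<Longrightarrow> transl_equiv \<gamma> c b"
  unfolding transl_equiv_def by (simp add: rtranclp.rtrancl_into_rtrancl)

lemma te_step': "transl_equiv \<gamma> c a \<Longrightarrow> tstep \<gamma> b a \<Longrightarrow> transl_equiv \<gamma> c b"
  unfolding transl_equiv_def by (simp add: rtranclp.rtrancl_into_rtrancl)

lemma partB:
  assumes dc: "downc \<beta>" and P: "PP \<beta>"
    and aT: "arrow (truncation \<beta> j 1) a" and te: "transl_equiv (truncation \<beta> j 1) c a"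
    and cT: "arrow (truncation \<beta> j 1) c"
    and ab: "arrow \<beta> a" and le: "fst a j \<le> snd a j" and ns: "nonstandard a"
  shows "equiv_zero (truncation \<beta> j 1) c"
proof -
  let ?T = "truncation \<beta> j 1"
  define \<Theta> where "\<Theta> = (\<lambda>z::'a mon \<times> 'a mon. (fst z, \<lambda>k. snd z k - unitv j k))"
  define b where "b = (fst a, \<lambda>k. snd a k + unitv j k)"
  have bb: "arrow \<beta> b" using ab aT unfolding b_def arrow_def truncation_def by simp
  have "\<And>k. (snd b k < fst b k) = (snd a k < fst a k)"
    using le by (auto simp: b_def unitv_def)
  then have nsb: "nonstandard b" using ns unfolding nonstandard_def standard_def by simp
  from P bb nsb have "equiv_zero \<beta> b" unfolding PP_def by blast
  then obtain d' j' i where tb: "transl_equiv \<beta> b (d', j')" and z: "j' i = 0" "d' i \<ge> 1"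
      "(\<lambda>k. d' k - unitv i k) \<notin> \<beta>"
    unfolding equiv_zero_def by blast
  have R: "fst z j < snd z j \<and> transl_equiv ?T c (\<Theta> z)" if "transl_equiv \<beta> b z" for z
    using that unfolding transl_equiv_def
  proof (induction rule: rtranclp_induct)
    case base
    have "\<Theta> b = a" by (simp add: \<Theta>_def b_def unitv_def)
    then show ?case using te le by (simp add: b_def unitv_def transl_equiv_def)
  next
    case (step y z)
    have ar: "arrow \<beta> z" and sh: "\<exists>i. z = shift_up i y \<or> y = shift_up i z"
      using step(2) unfolding tstep_def by auto
    have lt: "fst z j < snd z j" using sh step(3) by (auto simp: unitv_def)
    have aTz: "arrow ?T (\<Theta> z)"
    proof -
      have "fst z \<notin> \<beta>" using ar by (simp add: arrow_def)
      then have "fst z \<notin> ?T" using T_sub[OF dc] by blast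
      moreover have "(\<lambda>k. snd z k - unitv j k + unitv j k) = snd z"
        using lt by (auto simp: unitv_def fun_eq_iff)
      ultimately show ?thesis using ar by (simp add: arrow_def \<Theta>_def truncation_def)
    qed
    have aTy: "arrow ?T (\<Theta> y)" using te_arrow[OF _ cT] step(3) unfolding transl_equiv_def by blast
    from sh obtain i where "z = shift_up i y \<or> y = shift_up i z" by blast
    then have "\<Theta> z = shift_up i (\<Theta> y) \<or> \<Theta> y = shift_up i (\<Theta> z)"
      using lt step(3) by (auto simp: \<Theta>_def shift_up_def fun_eq_iff unitv_def)
    then have "tstep ?T (\<Theta> y) (\<Theta> z)" using aTz aTy unfolding tstep_def by blast
    then show ?case using lt te_step step(3) unfolding transl_equiv_def by blast
  qed
  from R[OF tb] have lt: "d' j < j' j" and tc: "transl_equiv ?T c (d', \<lambda>k. j' k - unitv j k)"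
    by (auto simp: \<Theta>_def)
  have ij: "i \<noteq> j" using lt z(1) by auto
  have "(\<lambda>k. d' k - unitv i k) \<notin> ?T" using z(3) T_sub[OF dc] by blast
  then show ?thesis unfolding equiv_zero_def using tc z ij
    by (intro exI[of _ d'] exI[of _ "\<lambda>k. j' k - unitv j k"]) (auto simp: unitv_def)
qed


lemma L1:
  assumes dc: "downc \<beta>" and P: "PP \<beta>"
  shows "PP (truncation \<beta> j 1)"
  unfolding PP_def
proof (intro allI impI)
  let ?T = "truncation \<beta> j 1"
  fix c assume "arrow ?T c \<and> nonstandard c"
  then have cT: "arrow ?T c" and nsc: "nonstandard c" by simp_all
  have "arrow \<beta> (shift_up j c)" using arrow_T_iff[THEN iffD1, OF cT] .
  moreover have "nonstandard (shift_up j c)" using nonstandard_shift[THEN iffD2, OF nsc] .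
  ultimately have "equiv_zero \<beta> (shift_up j c)" using P[unfolded PP_def, rule_format] by blast
  then obtain d' j' i where tb: "transl_equiv \<beta> (shift_up j c) (d', j')" and z: "j' i = 0" "d' i \<ge> 1"
      "(\<lambda>k. d' k - unitv i k) \<notin> \<beta>"
    unfolding equiv_zero_def by blast
  have Q: "(\<exists>a. z = shift_up j a \<and> arrow ?T a \<and> nonstandard a \<and> transl_equiv ?T c a)
           \<or> equiv_zero ?T c" if "transl_equiv \<beta> (shift_up j c) z" for z
    using that[unfolded transl_equiv_def]
  proof (induction rule: rtranclp_induct)
    case base
    have "transl_equiv ?T c c" by (simp add: transl_equiv_def)
    then show ?case using cT nsc by blast
  next
    case (step y z)
    have ar: "arrow \<beta> z" and sh: "\<exists>i. z = shift_up i y \<or> y = shift_up i z"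
      using step(2) unfolding tstep_def by auto
    show ?case
    proof (cases "equiv_zero ?T c")
      case True then show ?thesis by blast
    next
      case False
      with step(3) obtain a where ya: "y = shift_up j a" and aT: "arrow ?T a"
        and nsa: "nonstandard a" and tea: "transl_equiv ?T c a" by blast
      from sh obtain i where "z = shift_up i y \<or> y = shift_up i z" by blast
      then show ?thesis
      proof
        assume zi: "z = shift_up i y"
        define a2 where "a2 = shift_up i a"
        have z2: "z = shift_up j a2" unfolding zi ya a2_def by (rule shift_comm)
        have aT2: "arrow ?T a2" unfolding arrow_T_iff using ar z2 by simp
        have "tstep ?T a a2" using aT aT2 a2_def unfolding tstep_def by blast
        then have "transl_equiv ?T c a2" using tea te_step by blast
        moreover have "nonstandard a2" using nsa unfolding a2_def nonstandard_shift .
        ultimately show ?thesis using z2 aT2 by blast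
      next
        assume yi: "y = shift_up i z"
        show ?thesis
        proof (cases "fst z j \<ge> 1 \<and> snd z j \<ge> 1")
          case True
          define a2 where "a2 = (\<lambda>k. fst z k - unitv j k, \<lambda>k. snd z k - unitv j k)"
          have z2: "z = shift_up j a2" using True
            by (cases z) (auto simp: a2_def shift_up_def fun_eq_iff unitv_def)
          have "shift_up j a = shift_up i (shift_up j a2)" using ya yi z2 by simp
          also have "\<dots> = shift_up j (shift_up i a2)" by (rule shift_comm)
          finally have "shift_up j a = shift_up j (shift_up i a2)" .
          then have aa: "a = shift_up i a2" by (rule shift_inj)
          have aT2: "arrow ?T a2" unfolding arrow_T_iff using ar z2 by simp
          have "tstep ?T a a2" using aT aT2 aa unfolding tstep_def by blast
          then have "transl_equiv ?T c a2" using tea te_step by blast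
          moreover have "nonstandard a2" using nsa unfolding aa nonstandard_shift .
          ultimately show ?thesis using z2 aT2 by blast
        next
          case False
          have y1: "fst y j = fst a j + 1" "snd y j = snd a j + 1" using ya by (simp_all add: unitv_def)
          have y2: "fst y j = fst z j + unitv i j" "snd y j = snd z j + unitv i j" using yi by simp_all
          have "i = j"
          proof (rule ccontr)
            assume "i \<noteq> j"
            then have "unitv i j = 0" by (simp add: unitv_def)
            then show False using y1 y2 False by simp
          qed
          then have "shift_up j a = shift_up j z" using ya yi by simp
          then have za: "z = a" by (rule shift_inj[symmetric])
          have ab: "arrow \<beta> a" using ar za by simp
          have mn: "fst a j = 0 \<or> snd a j = 0" using False za by auto
          show ?thesis
          proof (cases "snd a j < fst a j")
            case True
            then have s0: "snd a j = 0" and f1: "fst a j \<ge> 1" using mn by auto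
            have "(\<lambda>k. fst a k - unitv j k + unitv j k) = fst a"
              using f1 by (auto simp: unitv_def fun_eq_iff)
            then have "(\<lambda>k. fst a k - unitv j k) \<notin> ?T" using ab
              by (simp add: truncation_def arrow_def)
            moreover have "transl_equiv ?T c (fst a, snd a)" using tea by simp
            ultimately have "equiv_zero ?T c" unfolding equiv_zero_def using s0 f1 by blast
            then show ?thesis by blast
          next
            case False
            then have "equiv_zero ?T c"
              using partB[OF dc P aT tea cT ab _ nsa] by simp
            then show ?thesis by blast
          qed
        qed
      qed
    qed
  qed
  show "equiv_zero ?T c"
  proof (cases "equiv_zero ?T c")
    case True then show ?thesis .
  next
    case False
    with Q[OF tb] obtain a where da: "(d', j') = shift_up j a" and tea: "transl_equiv ?T c a"
      by blast
    have dd: "d' = (\<lambda>k. fst a k + unitv j k)" "j' = (\<lambda>k. snd a k + unitv j k)"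
      using da by (simp_all add: shift_up_def)
    have fa: "fst a = (\<lambda>k. d' k - unitv j k)" "snd a = (\<lambda>k. j' k - unitv j k)"
      and jj: "j' j \<ge> 1"
      unfolding dd by (auto simp: fun_eq_iff unitv_def)
    have ij: "i \<noteq> j" using jj z(1) by auto
    have e2: "(\<lambda>k. fst a k - unitv i k + unitv j k) = (\<lambda>k. d' k - unitv i k)"
      using ij unfolding dd by (auto simp: fun_eq_iff unitv_def)
    have nT: "(\<lambda>k. fst a k - unitv i k) \<notin> ?T"
      using z(3) by (simp add: truncation_def e2)
    have s0: "snd a i = 0" using fa(2) z(1) by simp
    have f1: "fst a i \<ge> 1" using fa(1) z(2) ij by (simp add: unitv_def)
    have "transl_equiv ?T c (fst a, snd a)" using tea by simp
    then show ?thesis unfolding equiv_zero_def using s0 f1 nT by blast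
  qed
qed

lemma trunc_Suc: "truncation \<beta> j (Suc h) = truncation (truncation \<beta> j h) j 1"
  by (auto simp: truncation_def algebra_simps)

lemma trunc_0: "truncation \<beta> j 0 = \<beta>"
  by (simp add: truncation_def)

lemma downc_trunc: "downc \<beta> \<Longrightarrow> downc (truncation \<beta> j h)"
  unfolding downc_def truncation_def divides_mon_def by force

theorem theorem7p2:
  fixes \<beta> :: "('v::finite) mon set" and j :: 'v and h :: nat
  assumes "basis_set \<beta>"
    and "\<forall>c. arrow \<beta> c \<and> nonstandard c \<longrightarrow> equiv_zero \<beta> c"
    and "h > 0"
    and "\<exists>m\<in>\<beta>. h \<le> m j"
  shows "\<forall>c. arrow (truncation \<beta> j h) c \<and> nonstandard c
           \<longrightarrow> equiv_zero (truncation \<beta> j h) c"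
proof -
  have dc: "downc \<beta>" using assms(1) by (simp add: basis_set_def downc_def)
  have "PP (truncation \<beta> j n)" for n
  proof (induction n)
    case 0 then show ?case using assms(2) by (simp add: trunc_0 PP_def)
  next
    case (Suc n)
    have "PP (truncation (truncation \<beta> j n) j 1)" by (rule L1[OF downc_trunc[OF dc] Suc.IH])
    then show ?case by (simp only: trunc_Suc)
  qed
  then show ?thesis unfolding PP_def by blast
qed

end
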